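(* Let $0<S<T$, let $\tilde\beta:[0,T]\to\mathbb{R}^d$, $\tilde B:[0,T]\to\mathbb{R}^{d\times d}$, $\tilde\sigma:[0,T]\to\mathbb{R}^{d\times d'}$ be continuous, $\tilde a=\tilde\sigma\tilde\sigma'$, $L_S\in\mathbb{R}^{m_S\times d}$, $L_T\in\mathbb{R}^{m_T\times d}$, and let $\Sigma_S,\Sigma_T$ be symmetric positive definite matrices of sizes $m_S$, $m_T$. With $\tilde L$, $\Upsilon$ as in the context, assume that for every $t\in[0,T]$ the matrix $\tilde M(t)=\big(\int_t^T\tilde L(\tau)\tilde a(\tau)\tilde L(\tau)'\,\mathrm d\tau+\Upsilon(t)\big)^{-1}$ exists and that the null space of $\tilde L(t)$ is $\{0\}$. Let $\tilde H(t)=\tilde L(t)'\tilde M(t)\tilde L(t)$ and $\tilde H^\dagger(t)=\tilde H(t)^{-1}$. Then for $t\in(S,T]$, $$\frac{\mathrm d\tilde H^\dagger(t)}{\mathrm dt}=\tilde B(t)\tilde H^\dagger(t)+\tilde H^\dagger(t)\tilde B(t)'-\tilde a(t),\qquad \tilde H^\dagger(T)=\big(L_T'\Sigma_T^{-1}L_T\big)^{-1}.$$ On $[0,S]$ the same differential equation holds, and $\tilde H^\dagger(S)$ is obtained from the right limit $\tilde H^\dagger(S+)$ by $$\tilde H^\dagger(S)=\tilde H^\dagger(S+)-\tilde H^\dagger(S+)L_S'\big(\Sigma_S+L_S\tilde H^\dagger(S+)L_S'\big)^{-1}L_S\tilde H^\dagger(S+).$$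
   Context: Let $\Phi$ solve $\mathrm d\Phi(t)=\tilde B(t)\Phi(t)\,\mathrm dt$, $\Phi(0)=I$, and $\Phi(t,s)=\Phi(t)\Phi(s)^{-1}$. Define $\tilde L(t)=\begin{bmatrix}L_S\Phi(S,t)\mathbf 1_{[0,S]}(t)\\ L_T\Phi(T,t)\end{bmatrix}$ for $t\in[0,S]$ and $\tilde L(t)=L_T\Phi(T,t)$ for $t\in(S,T]$; $\Upsilon(t)=\operatorname{diag}(\Sigma_S,\Sigma_T)$ for $t\in[0,S]$ and $\Upsilon(t)=\Sigma_T$ for $t\in(S,T]$. For $t\in[0,S]$, in the integral defining $\tilde M(t)$ the integrand $\tilde L(\tau)$ means the $(m_S+m_T)\times d$ matrix $\begin{bmatrix}L_S\Phi(S,\tau)\mathbf 1_{[0,S]}(\tau)\\ L_T\Phi(T,\tau)\end{bmatrix}$ for all $\tau\in[t,T]$. $f(S+)$ denotes the right limit at $S$. *)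

theory Defs
  imports "HOL-Analysis.Analysis"
begin

definition trans_mat :: "(real \<Rightarrow> real^'d^'d) \<Rightarrow> real \<Rightarrow> real \<Rightarrow> real^'d^'d" where
  "trans_mat Phi t s = Phi t ** matrix_inv (Phi s)"

definition Ltil_stack ::
  "real^'d^'mS \<Rightarrow> real^'d^'mT \<Rightarrow> (real \<Rightarrow> real^'d^'d) \<Rightarrow> real \<Rightarrow> real \<Rightarrow> real
     \<Rightarrow> real^'d^('mS + 'mT)" where
  "Ltil_stack LmS LmT Phi S T tau =
     (\<chi> i. case i of
        Inl j \<Rightarrow> (if 0 \<le> tau \<and> tau \<le> S then (LmS ** trans_mat Phi S tau) $ j else 0)
      | Inr j \<Rightarrow> (LmT ** trans_mat Phi T tau) $ j)"

definition Ltil_last ::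
  "real^'d^'mT \<Rightarrow> (real \<Rightarrow> real^'d^'d) \<Rightarrow> real \<Rightarrow> real \<Rightarrow> real^'d^'mT" where
  "Ltil_last LmT Phi T tau = LmT ** trans_mat Phi T tau"

definition Ups_stack ::
  "real^'mS^'mS \<Rightarrow> real^'mT^'mT \<Rightarrow> real^('mS + 'mT)^('mS + 'mT)" where
  "Ups_stack SigS SigT =
     (\<chi> i k. case (i, k) of
        (Inl a, Inl b) \<Rightarrow> SigS $ a $ b
      | (Inr a, Inr b) \<Rightarrow> SigT $ a $ b
      | _ \<Rightarrow> 0)"

definition Minv_stack where
  "Minv_stack LmS LmT Phi a SigS SigT S T t =
     integral {t..T} (\<lambda>tau. Ltil_stack LmS LmT Phi S T tau ** a tau ** transpose (Ltil_stack LmS LmT Phi S T tau))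
     + Ups_stack SigS SigT"

definition Minv_last where
  "Minv_last LmT Phi a SigT T t =
     integral {t..T} (\<lambda>tau. Ltil_last LmT Phi T tau ** a tau ** transpose (Ltil_last LmT Phi T tau))
     + SigT"

definition Htil ::
  "real^'d^'mS \<Rightarrow> real^'d^'mT \<Rightarrow> (real \<Rightarrow> real^'d^'d) \<Rightarrow> (real \<Rightarrow> real^'d^'d)
    \<Rightarrow> real^'mS^'mS \<Rightarrow> real^'mT^'mT \<Rightarrow> real \<Rightarrow> real \<Rightarrow> real \<Rightarrow> real^'d^'d" where
  "Htil LmS LmT Phi a SigS SigT S T t =
     (if t \<le> S then
        transpose (Ltil_stack LmS LmT Phi S T t) ** matrix_inv (Minv_stack LmS LmT Phi a SigS SigT S T t)
          ** Ltil_stack LmS LmT Phi S T t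
      else
        transpose (Ltil_last LmT Phi T t) ** matrix_inv (Minv_last LmT Phi a SigT T t)
          ** Ltil_last LmT Phi T t)"

definition sym_posdef :: "real^'n^'n \<Rightarrow> bool" where
  "sym_posdef A \<longleftrightarrow> transpose A = A \<and> (\<forall>x. x \<noteq> 0 \<longrightarrow> x \<bullet> (A *v x) > 0)"

end

theory Submission
  imports Defs
begin

lemma norm_vec_le_sum: "norm (x::'a::real_normed_vector^'n) \<le> (\<Sum>i\<in>UNIV. norm (x$i))"
  unfolding norm_vec_def by (rule L2_set_le_sum) auto

lemma entry_le_norm: "\<bar>(A::real^'n^'m)$i$j\<bar> \<le> norm A"
  using component_le_norm_cart[of "A$i" j] Finite_Cartesian_Product.norm_nth_le[of A i] by linarith

lemma norm_mm_le:
  "norm ((A::real^'n^'m) ** (B::real^'p^'n)) \<le> norm A * norm B * (real CARD('m) * real CARD('p) * real CARD('n))"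
proof -
  have e: "\<bar>(A ** B)$i$k\<bar> \<le> real CARD('n) * (norm A * norm B)" for i k
  proof -
    have "\<bar>(A ** B)$i$k\<bar> = \<bar>\<Sum>j\<in>UNIV. A$i$j * B$j$k\<bar>" by (simp add: matrix_matrix_mult_def)
    also have "\<dots> \<le> (\<Sum>j\<in>UNIV. \<bar>A$i$j\<bar> * \<bar>B$j$k\<bar>)"
      by (rule order_trans[OF sum_abs]) (simp add: abs_mult)
    also have "\<dots> \<le> (\<Sum>j\<in>(UNIV::'n set). norm A * norm B)"
      by (rule sum_mono, rule mult_mono) (auto simp: entry_le_norm)
    finally show ?thesis by simp
  qed
  have "norm (A ** B) \<le> (\<Sum>i\<in>UNIV. norm ((A ** B)$i))" by (rule norm_vec_le_sum)
  also have "\<dots> \<le> (\<Sum>i\<in>(UNIV::'m set). \<Sum>k\<in>(UNIV::'p set). \<bar>(A ** B)$i$k\<bar>)"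
    by (rule sum_mono) (rule norm_le_l1_cart)
  also have "\<dots> \<le> (\<Sum>i\<in>(UNIV::'m set). \<Sum>k\<in>(UNIV::'p set). real CARD('n) * (norm A * norm B))"
    by (intro sum_mono e)
  finally show ?thesis by (simp add: algebra_simps)
qed

lemma bb_mm: "bounded_bilinear (\<lambda>(A::real^'n^'m) (B::real^'p^'n). A ** B)"
proof
  fix a a' :: "real^'n^'m" and b b' :: "real^'p^'n" and r :: real
  show "(a + a') ** b = a ** b + a' ** b" by (simp add: vec_eq_iff matrix_matrix_mult_def sum.distrib algebra_simps)
  show "a ** (b + b') = a ** b + a ** b'" by (simp add: vec_eq_iff matrix_matrix_mult_def sum.distrib algebra_simps)
  show "(r *\<^sub>R a) ** b = r *\<^sub>R (a ** b)"
    by (simp add: vec_eq_iff matrix_matrix_mult_def sum_distrib_left algebra_simps)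
  show "a ** (r *\<^sub>R b) = r *\<^sub>R (a ** b)"
    by (simp add: vec_eq_iff matrix_matrix_mult_def sum_distrib_left algebra_simps)
next
  show "\<exists>K. \<forall>a b. norm ((a::real^'n^'m) ** (b::real^'p^'n)) \<le> norm a * norm b * K"
    using norm_mm_le by blast
qed

lemma norm_mv_le: "norm ((a::real^'n^'m) *v b) \<le> norm a * norm b * (real CARD('m) * real CARD('n))"
proof -
  have e: "\<bar>(a *v b)$i\<bar> \<le> real CARD('n) * (norm a * norm b)" for i
  proof -
    have "\<bar>(a *v b)$i\<bar> = \<bar>\<Sum>j\<in>UNIV. a$i$j * b$j\<bar>" by (simp add: matrix_vector_mult_def)
    also have "\<dots> \<le> (\<Sum>j\<in>UNIV. \<bar>a$i$j\<bar> * \<bar>b$j\<bar>)"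
      by (rule order_trans[OF sum_abs]) (simp add: abs_mult)
    also have "\<dots> \<le> (\<Sum>j\<in>(UNIV::'n set). norm a * norm b)"
      by (rule sum_mono, rule mult_mono) (auto simp: entry_le_norm component_le_norm_cart)
    finally show ?thesis by simp
  qed
  have "norm (a *v b) \<le> (\<Sum>i\<in>UNIV. \<bar>(a *v b)$i\<bar>)" by (rule norm_le_l1_cart)
  also have "\<dots> \<le> (\<Sum>i\<in>(UNIV::'m set). real CARD('n) * (norm a * norm b))"
    by (intro sum_mono e)
  finally show ?thesis by (simp add: algebra_simps)
qed

lemma bb_mv: "bounded_bilinear (\<lambda>(A::real^'n^'m) (x::real^'n). A *v x)"
proof
  fix a a' :: "real^'n^'m" and b b' :: "real^'n" and r :: real
  show "(a + a') *v b = a *v b + a' *v b" by (simp add: matrix_vector_mult_add_rdistrib)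
  show "a *v (b + b') = a *v b + a *v b'" by (simp add: matrix_vector_right_distrib)
  show "(r *\<^sub>R a) *v b = r *\<^sub>R (a *v b)"
    by (simp add: vec_eq_iff matrix_vector_mult_def sum_distrib_left algebra_simps)
  show "a *v (r *\<^sub>R b) = r *\<^sub>R (a *v b)"
    by (simp add: vec_eq_iff matrix_vector_mult_def sum_distrib_left algebra_simps)
next
  show "\<exists>K. \<forall>a b. norm ((a::real^'n^'m) *v (b::real^'n)) \<le> norm a * norm b * K"
    using norm_mv_le by blast
qed

lemma bl_mv_left: "bounded_linear (\<lambda>A::real^'n^'m. A *v x)"
  by (rule bounded_bilinear.bounded_linear_left[OF bb_mv])

lemmas mm_add_l = bounded_bilinear.add_left[OF bb_mm]
lemmas mm_add_r = bounded_bilinear.add_right[OF bb_mm]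
lemmas mm_diff_l = bounded_bilinear.diff_left[OF bb_mm]
lemmas mm_diff_r = bounded_bilinear.diff_right[OF bb_mm]
lemmas mm_minus_l = bounded_bilinear.minus_left[OF bb_mm]
lemmas mm_minus_r = bounded_bilinear.minus_right[OF bb_mm]
lemmas mm_scaleR_l = bounded_bilinear.scaleR_left[OF bb_mm]
lemmas mm_scaleR_r = bounded_bilinear.scaleR_right[OF bb_mm]
lemmas mm_zero_l = bounded_bilinear.zero_left[OF bb_mm]
lemmas mm_zero_r = bounded_bilinear.zero_right[OF bb_mm]
lemmas mm_alg = mm_add_l mm_add_r mm_diff_l mm_diff_r mm_minus_l mm_minus_r mm_scaleR_l mm_scaleR_r mm_zero_l mm_zero_r

lemma inv_l: "invertible (A::real^'n^'n) \<Longrightarrow> matrix_inv A ** A = mat 1"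
  unfolding invertible_def matrix_inv_def by (rule someI2_ex) auto

lemma inv_r: "invertible (A::real^'n^'n) \<Longrightarrow> A ** matrix_inv A = mat 1"
  unfolding invertible_def matrix_inv_def by (rule someI2_ex) auto

lemma inv_unique:
  assumes "(A::real^'n^'n) ** B = mat 1"
  shows "matrix_inv A = B" "invertible A"
proof -
  have BA: "B ** A = mat 1" using assms matrix_left_right_inverse by blast
  show inv: "invertible A" using assms BA invertible_def by blast
  have "matrix_inv A = matrix_inv A ** (A ** B)" using assms by simp
  also have "\<dots> = B" by (simp add: matrix_mul_assoc inv_l[OF inv])
  finally show "matrix_inv A = B" .
qed

lemma invertible_inv: "invertible (A::real^'n^'n) \<Longrightarrow> invertible (matrix_inv A)"
  using inv_l invertible_def inv_r by blast

lemma inv_inv: "invertible (A::real^'n^'n) \<Longrightarrow> matrix_inv (matrix_inv A) = A"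
  using inv_unique(1) inv_l by blast

lemma inv_diff_eq:
  assumes "invertible (P::real^'n^'n)" "invertible Q"
  shows "matrix_inv P - matrix_inv Q = matrix_inv P ** (Q - P) ** matrix_inv Q"
proof -
  have "matrix_inv P ** (Q - P) ** matrix_inv Q
     = matrix_inv P ** (Q ** matrix_inv Q) - (matrix_inv P ** P) ** matrix_inv Q"
    by (simp add: mm_alg matrix_mul_assoc)
  also have "\<dots> = matrix_inv P - matrix_inv Q"
    using assms by (simp add: inv_l inv_r)
  finally show ?thesis by simp
qed

lemma inv_cont:
  fixes F :: "real \<Rightarrow> real^'n^'n"
  assumes cF: "continuous (at t within X) F" and inv: "\<And>s. s \<in> X \<Longrightarrow> invertible (F s)" and t: "t \<in> X"
  shows "continuous (at t within X) (\<lambda>s. matrix_inv (F s))"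
proof -
  define K where "K = real CARD('n) * real CARD('n) * real CARD('n)"
  have K1: "K > 0" unfolding K_def by simp
  have K2: "\<And>A B. norm ((A::real^'n^'n) ** (B::real^'n^'n)) \<le> norm A * norm B * K"
    unfolding K_def by (rule norm_mm_le)
  note K = K1 K2
  define G where "G s = matrix_inv (F s)" for s
  define a where "a = norm (G t)"
  define c where "c = K * K * a + 1"
  have "0 \<le> K * K * a" using K(1) by (simp add: a_def)
  then have c: "c > 0" by (simp add: c_def)
  have FF: "(F \<longlongrightarrow> F t) (at t within X)" using cF by (simp add: continuous_within)
  have evX: "eventually (\<lambda>s. s \<in> X) (at t within X)"
    by (simp add: eventually_at_filter)
  have evd: "eventually (\<lambda>s. dist (F s) (F t) < 1 / (2 * c)) (at t within X)"
    using tendstoD[OF FF] c by simp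
  have bnd: "norm (G s - G t) \<le> norm (G s) * norm (F s - F t) * c" if s: "s \<in> X" for s
  proof -
    have "G s - G t = G s ** (F t - F s) ** G t"
      unfolding G_def by (rule inv_diff_eq[OF inv[OF s] inv[OF t]])
    then have "norm (G s - G t) \<le> norm (G s ** (F t - F s)) * norm (G t) * K" using K(2) by metis
    also have "\<dots> \<le> (norm (G s) * norm (F t - F s) * K) * norm (G t) * K"
      using K by (intro mult_right_mono) auto
    also have "\<dots> = norm (G s) * norm (F s - F t) * (K * K * a)"
      by (simp add: a_def norm_minus_commute)
    also have "\<dots> \<le> norm (G s) * norm (F s - F t) * c"
      by (intro mult_left_mono) (auto simp: c_def)
    finally show ?thesis .
  qed
  have ev2: "eventually (\<lambda>s. norm (G s - G t) \<le> (2 * a * c) * norm (F s - F t)) (at t within X)"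
    using evX evd
  proof eventually_elim
    case (elim s)
    have b: "norm (G s - G t) \<le> norm (G s) * norm (F s - F t) * c" by (rule bnd[OF elim(1)])
    have d: "norm (F s - F t) * c \<le> 1/2"
      using elim(2) c by (simp add: dist_norm field_simps)
    have "norm (G s) \<le> a + norm (G s - G t)"
      unfolding a_def by (metis add.commute diff_add_cancel norm_triangle_ineq)
    also have "\<dots> \<le> a + norm (G s) * (norm (F s - F t) * c)" using b by (simp add: mult.assoc)
    also have "\<dots> \<le> a + norm (G s) * (1/2)"
      by (intro add_left_mono mult_left_mono d) auto
    finally have gs: "norm (G s) \<le> 2 * a" by simp
    have "norm (G s - G t) \<le> norm (G s) * (norm (F s - F t) * c)" using b by (simp add: mult.assoc)
    also have "\<dots> \<le> (2 * a) * (norm (F s - F t) * c)"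
      using c by (intro mult_right_mono gs) auto
    finally show ?case by (simp add: algebra_simps)
  qed
  have "((\<lambda>s. (2 * a * c) * norm (F s - F t)) \<longlongrightarrow> (2 * a * c) * norm (F t - F t)) (at t within X)"
    by (intro tendsto_intros FF)
  then have "((\<lambda>s. (2 * a * c) * norm (F s - F t)) \<longlongrightarrow> 0) (at t within X)" by simp
  then have "((\<lambda>s. G s - G t) \<longlongrightarrow> 0) (at t within X)"
    by (rule Lim_null_comparison[OF ev2[unfolded]]) 
  then have "(G \<longlongrightarrow> G t) (at t within X)" by (rule LIM_zero_cancel)
  then show ?thesis unfolding G_def[abs_def] continuous_within by simp
qed

lemma inv_deriv:
  fixes F :: "real \<Rightarrow> real^'n^'n"
  assumes dF: "(F has_vector_derivative F') (at t within X)"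
    and inv: "\<And>s. s \<in> X \<Longrightarrow> invertible (F s)" and t: "t \<in> X"
  shows "((\<lambda>s. matrix_inv (F s)) has_vector_derivative - (matrix_inv (F t) ** F' ** matrix_inv (F t))) (at t within X)"
proof -
  define G where "G s = matrix_inv (F s)" for s
  have cG: "(G \<longlongrightarrow> G t) (at t within X)"
    using inv_cont[OF has_vector_derivative_continuous[OF dF] inv t] by (simp add: G_def[abs_def] continuous_within)
  have dF': "((\<lambda>y. (1 / norm (y - t)) *\<^sub>R (F y - (F t + (y - t) *\<^sub>R F'))) \<longlongrightarrow> 0) (at t within X)"
    using dF unfolding has_vector_derivative_def has_derivative_within by simp
  define Q where "Q y = (1 / norm (y - t)) *\<^sub>R (F y - (F t + (y - t) *\<^sub>R F'))" for y
  have l1: "((\<lambda>y. G y ** Q y ** G t) \<longlongrightarrow> G t ** 0 ** G t) (at t within X)"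
    using dF' unfolding Q_def[symmetric] by (intro bounded_bilinear.tendsto[OF bb_mm] cG tendsto_const)
  have l2: "((\<lambda>y. (G y - G t) ** F' ** G t) \<longlongrightarrow> (G t - G t) ** F' ** G t) (at t within X)"
    by (intro bounded_bilinear.tendsto[OF bb_mm] tendsto_intros cG)
  have l2': "((\<lambda>y. ((y - t) / norm (y - t)) *\<^sub>R ((G y - G t) ** F' ** G t)) \<longlongrightarrow> 0) (at t within X)"
  proof (rule Lim_null_comparison)
    show "\<forall>\<^sub>F y in at t within X. norm (((y - t) / norm (y - t)) *\<^sub>R ((G y - G t) ** F' ** G t)) \<le> norm ((G y - G t) ** F' ** G t)"
      by (intro always_eventually allI) (auto simp: mult_left_le_one_le)
    show "((\<lambda>y. norm ((G y - G t) ** F' ** G t)) \<longlongrightarrow> 0) (at t within X)"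
      using tendsto_norm[OF l2] by simp
  qed
  have lim: "((\<lambda>y. - (G y ** Q y ** G t) - ((y - t) / norm (y - t)) *\<^sub>R ((G y - G t) ** F' ** G t)) \<longlongrightarrow> 0) (at t within X)"
    using tendsto_diff[OF tendsto_minus[OF l1] l2'] by simp
  have eq: "(1 / norm (y - t)) *\<^sub>R (G y - (G t + (y - t) *\<^sub>R (- (G t ** F' ** G t))))
     = - (G y ** Q y ** G t) - ((y - t) / norm (y - t)) *\<^sub>R ((G y - G t) ** F' ** G t)"
    if y: "y \<in> X" for y
  proof -
    have d: "G y - G t = - (G y ** (F y - F t) ** G t)"
      using inv_diff_eq[OF inv[OF y] inv[OF t]] unfolding G_def
      by (simp add: mm_alg)
    have e1: "G y ** Q y ** G t = (1 / norm (y - t)) *\<^sub>R (G y ** (F y - F t) ** G t - (y - t) *\<^sub>R (G y ** F' ** G t))"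
      unfolding Q_def by (simp add:  mm_alg
            algebra_simps)
    have e2: "(G y - G t) ** F' ** G t = G y ** F' ** G t - G t ** F' ** G t"
      by (simp add: mm_alg)
    have e0: "G y - (G t + (y - t) *\<^sub>R (- (G t ** F' ** G t))) = - (G y ** (F y - F t) ** G t) + (y - t) *\<^sub>R (G t ** F' ** G t)"
      using d by (simp add: algebra_simps)
    show ?thesis
      unfolding e0 e1 e2 by (simp add: scaleR_diff_right scaleR_add_right algebra_simps diff_divide_distrib scaleR_left_diff_distrib)
  qed
  have "((\<lambda>y. (1 / norm (y - t)) *\<^sub>R (G y - (G t + (y - t) *\<^sub>R (- (G t ** F' ** G t))))) \<longlongrightarrow> 0) (at t within X)"
  proof (rule tendsto_cong[THEN iffD2, OF _ lim])
    show "\<forall>\<^sub>F y in at t within X. (1 / norm (y - t)) *\<^sub>R (G y - (G t + (y - t) *\<^sub>R (- (G t ** F' ** G t))))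
     = - (G y ** Q y ** G t) - ((y - t) / norm (y - t)) *\<^sub>R ((G y - G t) ** F' ** G t)"
      unfolding eventually_at_filter by (intro always_eventually allI impI) (rule eq, assumption)
  qed
  then show ?thesis
    unfolding has_vector_derivative_def has_derivative_within G_def[abs_def]
    by (auto simp: bounded_linear_scaleR_left intro!: bounded_linear_minus)
qed

lemma phi_invertible:
  fixes Phi B :: "real \<Rightarrow> real^'d^'d"
  assumes cB: "continuous_on {0..T} B"
    and ode: "\<And>t. t \<in> {0..T} \<Longrightarrow> (Phi has_vector_derivative (B t ** Phi t)) (at t within {0..T})"
    and P0: "Phi 0 = mat 1" and t0: "t0 \<in> {0..T}"
  shows "invertible (Phi t0)"
proof -
  define K0 where "K0 = real CARD('d) * real CARD('d)"
  have K01: "K0 > 0" unfolding K0_def by simp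
  have K02: "\<And>A v. norm ((A::real^'d^'d) *v v) \<le> norm A * norm v * K0"
    unfolding K0_def by (rule norm_mv_le)
  note K0 = K01 K02
  have "bounded (B ` {0..T})" by (intro compact_imp_bounded compact_continuous_image cB) auto
  then obtain C where C: "C > 0" "\<And>s. s \<in> {0..T} \<Longrightarrow> norm (B s) \<le> C"
    unfolding bounded_pos by auto
  define K where "K = C * K0"
  have K: "K > 0" using C K0 by (simp add: K_def)
  have ker: "x = 0" if x0: "Phi t0 *v x = 0" for x
  proof -
    define w where "w s = Phi s *v x" for s
    have dw: "(w has_vector_derivative (B s *v w s)) (at s within {0..T})" if "s \<in> {0..T}" for s
      using bounded_linear.has_vector_derivative[OF bl_mv_left[of x] ode[OF that]]
      by (simp add: w_def[abs_def] matrix_vector_mul_assoc)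
    define f where "f s = exp (2 * K * s) * (w s \<bullet> w s)" for s
    define f' where "f' s = exp (2 * K * s) * (2 * K) * (w s \<bullet> w s) + exp (2 * K * s) * (w s \<bullet> (B s *v w s) + (B s *v w s) \<bullet> w s)" for s
    have df: "(f has_vector_derivative f' s) (at s within {0..t0})" if s: "s \<in> {0..t0}" for s
    proof -
      have sT: "s \<in> {0..T}" using s t0 by auto
      have dw': "(w has_vector_derivative (B s *v w s)) (at s within {0..t0})"
        by (rule has_vector_derivative_within_subset[OF dw[OF sT]]) (use t0 in auto)
      have "((\<lambda>s. w s \<bullet> w s) has_vector_derivative (w s \<bullet> (B s *v w s) + (B s *v w s) \<bullet> w s)) (at s within {0..t0})"
        by (rule bounded_bilinear.has_vector_derivative[OF bounded_bilinear_inner dw' dw'])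
      moreover have "((\<lambda>s. exp (2 * K * s)) has_vector_derivative (exp (2 * K * s) * (2 * K))) (at s within {0..t0})"
        unfolding has_real_derivative_iff_has_vector_derivative[symmetric]
        by (auto intro!: derivative_eq_intros)
      ultimately have "((\<lambda>s. exp (2 * K * s) * (w s \<bullet> w s)) has_vector_derivative
          (exp (2 * K * s) * (w s \<bullet> (B s *v w s) + (B s *v w s) \<bullet> w s) + exp (2 * K * s) * (2 * K) * (w s \<bullet> w s))) (at s within {0..t0})"
        by (rule bounded_bilinear.has_vector_derivative[OF bounded_bilinear_mult, rotated])
      then show ?thesis unfolding f_def[abs_def] f'_def by (simp add: algebra_simps)
    qed
    have t00: "0 \<le> t0" using t0 by auto
    have int: "(f' has_integral (f t0 - f 0)) {0..t0}"
      by (rule fundamental_theorem_of_calculus[OF t00]) (use df in auto)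
    have nn: "0 \<le> f' s" if s: "s \<in> {0..t0}" for s
    proof -
      have sT: "s \<in> {0..T}" using s t0 by auto
      have "\<bar>w s \<bullet> (B s *v w s)\<bar> \<le> norm (w s) * norm (B s *v w s)" by (rule Cauchy_Schwarz_ineq2)
      also have "\<dots> \<le> norm (w s) * (norm (B s) * norm (w s) * K0)" by (intro mult_left_mono K0(2)) auto
      also have "\<dots> \<le> norm (w s) * (C * norm (w s) * K0)"
        using C(2)[OF sT] K0 by (intro mult_left_mono mult_right_mono) auto
      also have "\<dots> = K * (w s \<bullet> w s)" by (simp add: K_def power2_norm_eq_inner[symmetric] power2_eq_square)
      finally have "\<bar>w s \<bullet> (B s *v w s)\<bar> \<le> K * (w s \<bullet> w s)" .
      then have "0 \<le> 2 * K * (w s \<bullet> w s) + (w s \<bullet> (B s *v w s) + (B s *v w s) \<bullet> w s)"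
        by (simp add: inner_commute)
      then have "0 \<le> exp (2 * K * s) * (2 * K * (w s \<bullet> w s) + (w s \<bullet> (B s *v w s) + (B s *v w s) \<bullet> w s))"
        by simp
      then show ?thesis unfolding f'_def by (simp add: algebra_simps)
    qed
    have "0 \<le> f t0 - f 0" by (rule has_integral_nonneg[OF int]) (use nn in auto)
    moreover have "f t0 = 0" using x0 by (simp add: f_def w_def)
    moreover have "f 0 = x \<bullet> x" by (simp add: f_def w_def P0)
    ultimately have "x \<bullet> x \<le> 0" by simp
    then show "x = 0" by (metis inner_eq_zero_iff inner_ge_zero order_antisym)
  qed
  then have "\<exists>B'. B' ** Phi t0 = mat 1" using matrix_left_invertible_ker by blast
  then show ?thesis using invertible_left_inverse by blast
qed

definition pdm :: "real^'n^'n \<Rightarrow> bool" where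
  "pdm A \<longleftrightarrow> (\<forall>x. x \<noteq> 0 \<longrightarrow> 0 < x \<bullet> (A *v x))"

definition psd :: "real^'n^'n \<Rightarrow> bool" where
  "psd A \<longleftrightarrow> (\<forall>x. 0 \<le> x \<bullet> (A *v x))"

lemma inner_transpose: "x \<bullet> (transpose L *v y) = (L *v x) \<bullet> (y::real^'m)"
  by (metis dot_lmul_matrix inner_commute transpose_matrix_vector)

lemma pdm_invertible: assumes "pdm (A::real^'n^'n)" shows "invertible A"
proof -
  have "\<forall>x. A *v x = 0 \<longrightarrow> x = 0" using assms unfolding pdm_def by force
  then have "\<exists>B'. B' ** A = mat 1" using matrix_left_invertible_ker by blast
  then show ?thesis using invertible_left_inverse by blast
qed

lemma pdm_inv: assumes "pdm (A::real^'n^'n)" shows "pdm (matrix_inv A)"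
  unfolding pdm_def
proof (intro allI impI)
  fix z :: "real^'n" assume z: "z \<noteq> 0"
  have inv: "invertible A" by (rule pdm_invertible[OF assms])
  define w where "w = matrix_inv A *v z"
  have zw: "z = A *v w" by (simp add: w_def matrix_vector_mul_assoc inv_r[OF inv])
  have "w \<noteq> 0" using z zw by auto
  then have "0 < w \<bullet> (A *v w)" using assms unfolding pdm_def by blast
  moreover have "z \<bullet> (matrix_inv A *v z) = (A *v w) \<bullet> w"
    by (simp add: w_def[symmetric] zw[symmetric])
  ultimately show "0 < z \<bullet> (matrix_inv A *v z)" by (simp add: inner_commute)
qed

lemma pdm_congr:
  assumes "pdm (A::real^'m^'m)" "\<And>x. (L::real^'n^'m) *v x = 0 \<Longrightarrow> x = 0"
  shows "pdm (transpose L ** A ** L)"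
  unfolding pdm_def
proof (intro allI impI)
  fix x :: "real^'n" assume "x \<noteq> 0"
  then have "L *v x \<noteq> 0" using assms(2) by blast
  then have "0 < (L *v x) \<bullet> (A *v (L *v x))" using assms(1) unfolding pdm_def by blast
  then show "0 < x \<bullet> ((transpose L ** A ** L) *v x)"
    by (simp add: matrix_vector_mul_assoc[symmetric] inner_transpose del: transpose_matrix_vector)
qed

lemma psd_congr:
  assumes "psd (A::real^'m^'m)"
  shows "psd (transpose (L::real^'n^'m) ** A ** L)"
  unfolding psd_def
proof
  fix x :: "real^'n"
  have "0 \<le> (L *v x) \<bullet> (A *v (L *v x))" using assms unfolding psd_def by blast
  then show "0 \<le> x \<bullet> ((transpose L ** A ** L) *v x)"
    by (simp add: matrix_vector_mul_assoc[symmetric] inner_transpose del: transpose_matrix_vector)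
qed

lemma psd_gram: "psd ((A::real^'n^'m) ** transpose A)"
  unfolding psd_def
proof
  fix x :: "real^'m"
  have "x \<bullet> ((A ** transpose A) *v x) = (transpose A *v x) \<bullet> (transpose A *v x)"
    by (metis inner_transpose matrix_vector_mul_assoc transpose_transpose)
  then show "0 \<le> x \<bullet> ((A ** transpose A) *v x)" by simp
qed

lemma psd_mat1: "psd (mat 1 :: real^'n^'n)" unfolding psd_def by simp

lemma pdm_add_psd: "pdm A \<Longrightarrow> psd B \<Longrightarrow> pdm (A + B)"
  unfolding pdm_def psd_def
  by (simp add: matrix_vector_mult_add_rdistrib inner_add_right add_pos_nonneg)

lemma psd_add: "psd A \<Longrightarrow> psd B \<Longrightarrow> psd (A + B)"
  unfolding psd_def
  by (simp add: matrix_vector_mult_add_rdistrib inner_add_right)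

lemma sym_posdef_pdm: "sym_posdef A \<Longrightarrow> pdm A"
  unfolding sym_posdef_def pdm_def by blast

lemma psd_integral:
  fixes g :: "real \<Rightarrow> real^'n^'n"
  assumes "g integrable_on I" "\<And>t. t \<in> I \<Longrightarrow> psd (g t)"
  shows "psd (integral I g)"
  unfolding psd_def
proof
  fix x :: "real^'n"
  have bl: "bounded_linear (\<lambda>A::real^'n^'n. x \<bullet> (A *v x))"
    by (intro bounded_linear_compose[OF bounded_linear_inner_right]
        bounded_bilinear.bounded_linear_left[OF bb_mv])
  have "0 \<le> integral I ((\<lambda>A. x \<bullet> (A *v x)) \<circ> g)"
    by (rule integral_nonneg[OF integrable_linear[OF assms(1) bl]]) (use assms(2) in \<open>auto simp: psd_def\<close>)
  also have "\<dots> = x \<bullet> (integral I g *v x)" by (rule integral_linear[OF assms(1) bl])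
  finally show "0 \<le> x \<bullet> (integral I g *v x)" .
qed

definition stk :: "real^'d^'a \<Rightarrow> real^'d^'c \<Rightarrow> real^'d^('a + 'c)" where
  "stk A C = (\<chi> i. case i of Inl j \<Rightarrow> A $ j | Inr j \<Rightarrow> C $ j)"

lemma sum_UNIV_plus: "(\<Sum>i\<in>(UNIV::('a::finite + 'b::finite) set). f i) = (\<Sum>j\<in>UNIV. f (Inl j)) + (\<Sum>j\<in>UNIV. f (Inr j))"
  by (subst UNIV_Plus_UNIV[symmetric], subst sum.Plus) (auto simp: o_def)

lemma stk_nth[simp]: "stk A C $ Inl j = A $ j" "stk A C $ Inr j' = C $ j'"
  by (simp_all add: stk_def)

lemma Ups_nth[simp]:
  "Ups_stack X Y $ Inl a $ Inl b = X $ a $ b" "Ups_stack X Y $ Inr c $ Inr d = Y $ c $ d"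
  "Ups_stack X Y $ Inl a $ Inr d = 0" "Ups_stack X Y $ Inr c $ Inl b = 0"
  by (simp_all add: Ups_stack_def)

lemma stk_mult: "stk A C ** P = stk (A ** P) (C ** P)"
  by (simp add: vec_eq_iff matrix_matrix_mult_def stk_def split: sum.split)

lemma Ups_stk: "Ups_stack X Y ** stk A C = stk (X ** A) (Y ** C)"
proof -
  have "(Ups_stack X Y ** stk A C) $ i $ k = stk (X ** A) (Y ** C) $ i $ k" for i k
    by (cases i) (simp_all add: matrix_matrix_mult_def sum_UNIV_plus)
  then show ?thesis by (simp add: vec_eq_iff)
qed

lemma stk_T_stk: "transpose (stk A C) ** stk D E = transpose A ** D + transpose C ** E"
  by (simp add: vec_eq_iff matrix_matrix_mult_def sum_UNIV_plus transpose_def)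

lemma quad_stk: "transpose (stk A C) ** Ups_stack X Y ** stk A C = transpose A ** X ** A + transpose C ** Y ** C"
  by (simp add: matrix_mul_assoc[symmetric] Ups_stk stk_T_stk)

lemma Ups_mult: "Ups_stack X Y ** Ups_stack X' Y' = Ups_stack (X ** X') (Y ** Y')"
proof -
  have "(Ups_stack X Y ** Ups_stack X' Y') $ i $ k = Ups_stack (X ** X') (Y ** Y') $ i $ k" for i k
    by (cases i; cases k) (simp_all add: matrix_matrix_mult_def sum_UNIV_plus)
  then show ?thesis by (simp add: vec_eq_iff)
qed

lemma Ups_one: "Ups_stack (mat 1) (mat 1) = mat 1"
proof -
  have "Ups_stack (mat 1) (mat 1) $ i $ k = (mat 1 :: real^('a+'b)^('a+'b)) $ i $ k" for i k
    by (cases i; cases k) (simp_all add: mat_def)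
  then show ?thesis by (simp add: vec_eq_iff)
qed

lemma Ups_add: "Ups_stack X Y + Ups_stack X' Y' = Ups_stack (X + X') (Y + Y')"
proof -
  have "(Ups_stack X Y + Ups_stack X' Y') $ i $ k = Ups_stack (X + X') (Y + Y') $ i $ k" for i k
    by (cases i; cases k) simp_all
  then show ?thesis by (simp add: vec_eq_iff)
qed

lemma Ups_inv:
  assumes "invertible X" "invertible Y"
  shows "matrix_inv (Ups_stack X Y) = Ups_stack (matrix_inv X) (matrix_inv Y)"
  by (rule inv_unique(1)) (simp add: Ups_mult inv_r assms Ups_one)

lemma Ups_zero_linear: "bounded_linear (\<lambda>Y. Ups_stack (0::real^'a^'a) (Y::real^'b^'b))"
proof -
  have "linear (\<lambda>Y. Ups_stack (0::real^'a^'a) (Y::real^'b^'b))"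
  proof
    fix Y Y' :: "real^'b^'b" and r :: real
    show "Ups_stack 0 (Y + Y') = Ups_stack 0 Y + Ups_stack 0 Y'" by (simp add: Ups_add)
    have "Ups_stack (0::real^'a^'a) (r *\<^sub>R Y) $ i $ k = (r *\<^sub>R Ups_stack (0::real^'a^'a) Y) $ i $ k" for i k
      by (cases i; cases k) simp_all
    then show "Ups_stack (0::real^'a^'a) (r *\<^sub>R Y) = r *\<^sub>R Ups_stack 0 Y" by (simp add: vec_eq_iff)
  qed
  then show ?thesis by (simp add: linear_conv_bounded_linear)
qed

lemma pdm_Ups: assumes "pdm X" "pdm Y" shows "pdm (Ups_stack X Y)"
  unfolding pdm_def
proof (intro allI impI)
  fix x :: "real^('a+'b)" assume x: "x \<noteq> 0"
  define xl where "xl = (\<chi> j. x $ Inl j)"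
  define xr where "xr = (\<chi> j. x $ Inr j)"
  have q: "x \<bullet> (Ups_stack X Y *v x) = xl \<bullet> (X *v xl) + xr \<bullet> (Y *v xr)"
    by (simp add: inner_vec_def matrix_vector_mult_def sum_UNIV_plus xl_def xr_def)
  have nz: "xl \<noteq> 0 \<or> xr \<noteq> 0"
  proof (rule ccontr)
    assume "\<not> (xl \<noteq> 0 \<or> xr \<noteq> 0)"
    then have "x $ i = 0" for i by (cases i) (auto simp: xl_def xr_def vec_eq_iff)
    then show False using x by (simp add: vec_eq_iff)
  qed
  have a: "0 \<le> xl \<bullet> (X *v xl)" "0 \<le> xr \<bullet> (Y *v xr)"
    using assms unfolding pdm_def by (metis inner_zero_left matrix_vector_mult_0_right order_less_imp_le order_refl)+
  show "0 < x \<bullet> (Ups_stack X Y *v x)"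
    using nz assms unfolding q pdm_def
    by (metis a add_pos_nonneg add_nonneg_pos)
qed

lemma transpose_add: "transpose (A + B) = transpose A + transpose (B::real^'n^'m)"
  by (simp add: vec_eq_iff transpose_def)

lemma transpose_minus: "transpose (- A) = - transpose (A::real^'n^'m)"
  by (simp add: vec_eq_iff transpose_def)

lemma bl_transpose: "bounded_linear (transpose :: real^'n^'m \<Rightarrow> real^'m^'n)"
proof -
  have "linear (transpose :: real^'n^'m \<Rightarrow> real^'m^'n)"
    by (rule linearI) (simp_all add: transpose_add transpose_scalar)
  then show ?thesis by (simp add: linear_conv_bounded_linear)
qed

lemma woodbury:
  fixes H :: "real^'d^'d" and Sg :: "real^'m^'m" and L :: "real^'d^'m"
  assumes iH: "invertible H" and iS: "invertible Sg"
    and iK: "invertible (Sg + L ** matrix_inv H ** transpose L)"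
  shows "matrix_inv (transpose L ** matrix_inv Sg ** L + H)
    = matrix_inv H - matrix_inv H ** transpose L ** matrix_inv (Sg + L ** matrix_inv H ** transpose L) ** L ** matrix_inv H"
proof -
  define P where "P = matrix_inv H"
  define Si where "Si = matrix_inv Sg"
  define K where "K = Sg + L ** P ** transpose L"
  define Ki where "Ki = matrix_inv K"
  have HP: "H ** P = mat 1" unfolding P_def by (rule inv_r[OF iH])
  have SiS: "Si ** Sg = mat 1" unfolding Si_def by (rule inv_l[OF iS])
  have KKi: "K ** Ki = mat 1" unfolding Ki_def K_def P_def by (rule inv_r[OF iK])
  have LPL: "L ** P ** transpose L = K - Sg" by (simp add: K_def)
  have e1: "transpose L ** Si ** L ** P ** transpose L ** Ki ** L ** P
      = transpose L ** Si ** (L ** P ** transpose L) ** Ki ** L ** P"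
    by (simp add: matrix_mul_assoc)
  also have "\<dots> = transpose L ** (Si ** (K ** Ki)) ** L ** P - transpose L ** (Si ** Sg) ** Ki ** L ** P"
    unfolding LPL by (simp add: mm_alg matrix_mul_assoc)
  also have "\<dots> = transpose L ** Si ** L ** P - transpose L ** Ki ** L ** P"
    by (simp add: KKi SiS)
  finally have e1: "transpose L ** Si ** L ** P ** transpose L ** Ki ** L ** P
      = transpose L ** Si ** L ** P - transpose L ** Ki ** L ** P" .
  have e2: "H ** P ** transpose L ** Ki ** L ** P = transpose L ** Ki ** L ** P"
    by (simp add: HP)
  have "(transpose L ** Si ** L + H) ** (P - P ** transpose L ** Ki ** L ** P)
     = transpose L ** Si ** L ** P - transpose L ** Si ** L ** P ** transpose L ** Ki ** L ** P
       + H ** P - H ** P ** transpose L ** Ki ** L ** P"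
    by (simp add: mm_alg matrix_mul_assoc)
  also have "\<dots> = mat 1" unfolding e1 e2 HP by simp
  finally show ?thesis unfolding P_def[symmetric] Si_def[symmetric] K_def[symmetric] Ki_def[symmetric]
    by (rule inv_unique(1))
qed

lemma riccati:
  fixes L :: "real \<Rightarrow> real^'d^'m" and N :: "real \<Rightarrow> real^'m^'m" and B a :: "real \<Rightarrow> real^'d^'d"
  assumes dL: "(L has_vector_derivative - (L t ** B t)) (at t within X)"
    and dN: "(N has_vector_derivative - (L t ** a t ** transpose (L t))) (at t within X)"
    and iN: "\<And>s. s \<in> X \<Longrightarrow> invertible (N s)"
    and iH: "\<And>s. s \<in> X \<Longrightarrow> invertible (transpose (L s) ** matrix_inv (N s) ** L s)"
    and t: "t \<in> X"
  shows "((\<lambda>s. matrix_inv (transpose (L s) ** matrix_inv (N s) ** L s)) has_vector_derivative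
      (B t ** matrix_inv (transpose (L t) ** matrix_inv (N t) ** L t)
       + matrix_inv (transpose (L t) ** matrix_inv (N t) ** L t) ** transpose (B t) - a t)) (at t within X)"
proof -
  define M where "M s = matrix_inv (N s)" for s
  define H0 where "H0 = transpose (L t) ** M t ** L t"
  define Hd where "Hd = matrix_inv H0"
  have dM: "(M has_vector_derivative (M t ** (L t ** a t ** transpose (L t)) ** M t)) (at t within X)"
    using inv_deriv[OF dN iN t] unfolding M_def[abs_def] by (simp add: mm_alg)
  have dLT: "((\<lambda>s. transpose (L s)) has_vector_derivative - (transpose (B t) ** transpose (L t))) (at t within X)"
    using bounded_linear.has_vector_derivative[OF bl_transpose dL]
    by (simp add: transpose_minus matrix_transpose_mul)
  have dLM: "((\<lambda>s. transpose (L s) ** M s) has_vector_derivative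
      (transpose (L t) ** (M t ** (L t ** a t ** transpose (L t)) ** M t) + - (transpose (B t) ** transpose (L t)) ** M t)) (at t within X)"
    by (rule bounded_bilinear.has_vector_derivative[OF bb_mm dLT dM])
  have dH: "((\<lambda>s. transpose (L s) ** M s ** L s) has_vector_derivative
      (transpose (L t) ** M t ** - (L t ** B t) + (transpose (L t) ** (M t ** (L t ** a t ** transpose (L t)) ** M t) + - (transpose (B t) ** transpose (L t)) ** M t) ** L t)) (at t within X)"
    by (rule bounded_bilinear.has_vector_derivative[OF bb_mm dLM dL])
  have H'eq: "transpose (L t) ** M t ** - (L t ** B t) + (transpose (L t) ** (M t ** (L t ** a t ** transpose (L t)) ** M t) + - (transpose (B t) ** transpose (L t)) ** M t) ** L t
      = - (H0 ** B t) + H0 ** a t ** H0 - transpose (B t) ** H0"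
    unfolding H0_def by (simp add: mm_alg matrix_mul_assoc)
  have iH0: "\<And>s. s \<in> X \<Longrightarrow> invertible (transpose (L s) ** M s ** L s)" using iH by (simp add: M_def)
  have dHd: "((\<lambda>s. matrix_inv (transpose (L s) ** M s ** L s)) has_vector_derivative
      - (Hd ** (- (H0 ** B t) + H0 ** a t ** H0 - transpose (B t) ** H0) ** Hd)) (at t within X)"
    using inv_deriv[OF dH iH0 t] unfolding H'eq Hd_def H0_def .
  have HdH: "Hd ** H0 = mat 1" "H0 ** Hd = mat 1"
    unfolding Hd_def using iH0[OF t] by (simp_all add: H0_def inv_l inv_r)
  have "Hd ** (- (H0 ** B t) + H0 ** a t ** H0 - transpose (B t) ** H0) ** Hd
      = - ((Hd ** H0) ** (B t ** Hd)) + (Hd ** H0) ** a t ** (H0 ** Hd) - (Hd ** transpose (B t)) ** (H0 ** Hd)"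
    by (simp add: mm_alg matrix_mul_assoc)
  also have "\<dots> = - (B t ** Hd) + a t - Hd ** transpose (B t)" by (simp add: HdH)
  finally have fin: "- (Hd ** (- (H0 ** B t) + H0 ** a t ** H0 - transpose (B t) ** H0) ** Hd)
      = B t ** Hd + Hd ** transpose (B t) - a t" by (simp add: algebra_simps)
  have "((\<lambda>s. matrix_inv (transpose (L s) ** M s ** L s)) has_vector_derivative
      (B t ** Hd + Hd ** transpose (B t) - a t)) (at t within X)"
    using dHd unfolding fin .
  then show ?thesis unfolding Hd_def H0_def M_def .
qed

lemma stk0_block: "stk 0 C ** X ** transpose (stk 0 C) = Ups_stack 0 (C ** X ** transpose C)"
  apply (unfold vec_eq_iff, intro allI)
  subgoal for i k by (cases i; cases k) (simp_all add: stk_mult matrix_matrix_mult_def transpose_def)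
  done

lemma pdm_psd: "pdm A \<Longrightarrow> psd A"
  unfolding pdm_def psd_def by (metis inner_zero_left less_eq_real_def)

locale setting =
  fixes S T :: real
    and B :: "real \<Rightarrow> real^'d^'d"
    and sigma :: "real \<Rightarrow> real^'d2^'d"
    and a :: "real \<Rightarrow> real^'d^'d"
    and Phi :: "real \<Rightarrow> real^'d^'d"
    and LmS :: "real^'d^'mS" and LmT :: "real^'d^'mT"
    and SigS :: "real^'mS^'mS" and SigT :: "real^'mT^'mT"
  assumes ST: "0 < S" "S < T"
    and contB: "continuous_on {0..T} B" and contsig: "continuous_on {0..T} sigma"
    and a_eq: "\<And>t. a t = sigma t ** transpose (sigma t)"
    and Phi_ode: "\<And>t. t \<in> {0..T} \<Longrightarrow> (Phi has_vector_derivative (B t ** Phi t)) (at t within {0..T})"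
    and Phi0: "Phi 0 = mat 1"
    and SigS: "sym_posdef SigS" and SigT: "sym_posdef SigT"
    and N1: "\<And>t x. t \<in> {0..S} \<Longrightarrow> Ltil_stack LmS LmT Phi S T t *v x = 0 \<Longrightarrow> x = 0"
    and N2: "\<And>t x. t \<in> {S<..T} \<Longrightarrow> Ltil_last LmT Phi T t *v x = 0 \<Longrightarrow> x = 0"
begin

definition "PhiI s = matrix_inv (Phi s)"
definition "Lt s = Ltil_last LmT Phi T s"
definition "Lf s = stk (LmS ** trans_mat Phi S s) (LmT ** trans_mat Phi T s)"
definition "Lst s = Ltil_stack LmS LmT Phi S T s"
definition "gl s = Lt s ** a s ** transpose (Lt s)"
definition "gf s = Lf s ** a s ** transpose (Lf s)"
definition "gst s = Lst s ** a s ** transpose (Lst s)"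
definition "Nl s = Minv_last LmT Phi a SigT T s"
definition "Nst s = integral {s..S} gf + (integral {S..T} gst + Ups_stack SigS SigT)"

lemma invP: "s \<in> {0..T} \<Longrightarrow> invertible (Phi s)"
  using phi_invertible[OF contB Phi_ode Phi0] by auto

lemma PhiPhiI: "s \<in> {0..T} \<Longrightarrow> Phi s ** PhiI s = mat 1"
  unfolding PhiI_def by (rule inv_r[OF invP])

lemma dPhiI: assumes s: "s \<in> {0..T}"
  shows "(PhiI has_vector_derivative - (PhiI s ** B s)) (at s within {0..T})"
proof -
  have "((\<lambda>s. matrix_inv (Phi s)) has_vector_derivative - (matrix_inv (Phi s) ** (B s ** Phi s) ** matrix_inv (Phi s))) (at s within {0..T})"
    by (rule inv_deriv[OF Phi_ode[OF s] invP s])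
  moreover have "matrix_inv (Phi s) ** (B s ** Phi s) ** matrix_inv (Phi s) = matrix_inv (Phi s) ** B s"
    using PhiPhiI[OF s] by (simp add: matrix_mul_assoc[symmetric] PhiI_def)
  ultimately show ?thesis by (simp add: PhiI_def[abs_def])
qed

lemma dQ: assumes s: "s \<in> {0..T}"
  shows "((\<lambda>s. Q ** PhiI s) has_vector_derivative - (Q ** PhiI s ** B s)) (at s within {0..T})"
  by (rule has_vector_derivative_eq_rhs[OF bounded_linear.has_vector_derivative[OF
        bounded_bilinear.bounded_linear_right[OF bb_mm] dPhiI[OF s]]]) (simp add: mm_alg matrix_mul_assoc)

lemma Lt_eq: "Lt s = (LmT ** Phi T) ** PhiI s"
  by (simp add: Lt_def Ltil_last_def trans_mat_def PhiI_def matrix_mul_assoc)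

lemma Lf_eq: "Lf s = stk (LmS ** Phi S) (LmT ** Phi T) ** PhiI s"
  by (simp add: Lf_def stk_mult trans_mat_def PhiI_def matrix_mul_assoc)

lemma Lst_eq1: "s \<in> {0..S} \<Longrightarrow> Lst s = Lf s"
  by (auto simp: Lst_def Ltil_stack_def Lf_def stk_def vec_eq_iff split: sum.split)

lemma Lst_eq2: "s \<in> {S<..T} \<Longrightarrow> Lst s = stk 0 (Lt s)"
  by (auto simp: Lst_def Ltil_stack_def Lt_def Ltil_last_def stk_def vec_eq_iff split: sum.split)

lemma dLt: "s \<in> {0..T} \<Longrightarrow> (Lt has_vector_derivative - (Lt s ** B s)) (at s within {0..T})"
  unfolding Lt_eq[abs_def] Lt_eq by (rule dQ)

lemma dLf: "s \<in> {0..T} \<Longrightarrow> (Lf has_vector_derivative - (Lf s ** B s)) (at s within {0..T})"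
  unfolding Lf_eq[abs_def] Lf_eq by (rule dQ)

lemma contLt: "continuous_on {0..T} Lt"
  unfolding continuous_on_eq_continuous_within using dLt has_vector_derivative_continuous by blast

lemma contLf: "continuous_on {0..T} Lf"
  unfolding continuous_on_eq_continuous_within using dLf has_vector_derivative_continuous by blast

lemma conta: "continuous_on {0..T} a"
proof -
  have "continuous_on {0..T} (\<lambda>t. sigma t ** transpose (sigma t))"
    by (rule bounded_bilinear.continuous_on[OF bb_mm contsig bounded_linear.continuous_on[OF bl_transpose contsig]])
  then show ?thesis using a_eq by simp
qed

lemma cont_g:
  assumes "continuous_on {0..T} L"
  shows "continuous_on {0..T} (\<lambda>s. L s ** a s ** transpose (L s))"
  by (intro bounded_bilinear.continuous_on[OF bb_mm] bounded_linear.continuous_on[OF bl_transpose] assms conta)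

lemma contgl: "continuous_on {0..T} gl" unfolding gl_def[abs_def] by (rule cont_g[OF contLt])
lemma contgf: "continuous_on {0..T} gf" unfolding gf_def[abs_def] by (rule cont_g[OF contLf])

lemma psd_g: "psd (L ** a s ** transpose L)"
proof -
  have "L ** a s ** transpose L = (L ** sigma s) ** transpose (L ** sigma s)"
    by (simp add: a_eq matrix_transpose_mul matrix_mul_assoc)
  then show ?thesis using psd_gram by metis
qed

lemma gl_int: "s \<in> {0..T} \<Longrightarrow> gl integrable_on {s..T}"
  by (rule integrable_continuous_real, rule continuous_on_subset[OF contgl]) auto

lemma SinT: "S \<in> {0..T}" using ST by auto

lemma gf_int: "s \<in> {0..T} \<Longrightarrow> s' \<le> T \<Longrightarrow> gf integrable_on {s..s'}"
  by (rule integrable_continuous_real, rule continuous_on_subset[OF contgf]) auto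

lemma gst_eq2: "s \<in> {S<..T} \<Longrightarrow> gst s = Ups_stack 0 (gl s)"
  by (simp add: gst_def Lst_eq2 stk0_block gl_def)

lemma gst_intST: "gst integrable_on {S..T}"
proof -
  have U: "(\<lambda>s. Ups_stack 0 (gl s)) integrable_on {S..T}"
    using integrable_linear[OF gl_int[OF SinT] Ups_zero_linear] ST by (simp add: o_def)
  show ?thesis
    by (rule integrable_spike_finite[where S="{S}", OF _ _ U]) (auto simp: gst_eq2)
qed

lemma gst_int: assumes s: "s \<in> {0..S}" shows "gst integrable_on {s..T}"
proof -
  have "gf integrable_on {s..S}" using s ST by (intro gf_int) auto
  then have "gst integrable_on {s..S}"
    by (rule integrable_eq) (use s in \<open>auto simp: gst_def gf_def Lst_eq1\<close>)
  then show ?thesis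
    using Henstock_Kurzweil_Integration.integrable_combine[of s S T gst] gst_intST s ST by auto
qed

lemma int_gstST: "integral {S..T} gst = Ups_stack 0 (integral {S..T} gl)"
proof -
  have "integral {S..T} gst = integral {S..T} (\<lambda>s. Ups_stack 0 (gl s))"
    by (rule integral_spike[where S="{S}"]) (auto simp: gst_eq2)
  also have "\<dots> = Ups_stack 0 (integral {S..T} gl)"
    using integral_linear[OF gl_int[OF SinT] Ups_zero_linear] ST by (simp add: o_def)
  finally show ?thesis .
qed

lemma Nst_eq: assumes s: "s \<in> {0..S}" shows "Minv_stack LmS LmT Phi a SigS SigT S T s = Nst s"
proof -
  have "integral {s..T} gst = integral {s..S} gst + integral {S..T} gst"
    using Henstock_Kurzweil_Integration.integral_combine[of s S T gst] gst_int[OF s] s ST by auto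
  moreover have "integral {s..S} gst = integral {s..S} gf"
    by (rule integral_cong) (use s in \<open>auto simp: gst_def gf_def Lst_eq1\<close>)
  ultimately show ?thesis
    unfolding Minv_stack_def Nst_def gst_def[abs_def] Lst_def[abs_def] by (simp add: add.assoc)
qed

lemma dNst: assumes s: "s \<in> {0..S}" shows "(Nst has_vector_derivative - gf s) (at s within {0..S})"
proof -
  have c: "continuous_on {0..S} gf" by (rule continuous_on_subset[OF contgf]) (use ST in auto)
  show ?thesis unfolding Nst_def[abs_def]
    by (rule has_vector_derivative_eq_rhs, rule has_vector_derivative_add[OF integral_has_vector_derivative'[OF c s] has_vector_derivative_const]) simp
qed

lemma dNl: assumes s: "s \<in> {S..T}" shows "(Nl has_vector_derivative - gl s) (at s within {S..T})"
proof -
  have c: "continuous_on {S..T} gl" by (rule continuous_on_subset[OF contgl]) (use ST in auto)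
  show ?thesis unfolding Nl_def[abs_def] Minv_last_def gl_def[symmetric] Lt_def[symmetric]
    by (rule has_vector_derivative_eq_rhs, rule has_vector_derivative_add[OF integral_has_vector_derivative'[OF c s] has_vector_derivative_const]) simp
qed

lemma pd_Nl: assumes s: "s \<in> {S..T}" shows "pdm (Nl s)"
proof -
  have "psd (integral {s..T} gl)"
    by (rule psd_integral[OF gl_int]) (use s ST in \<open>auto simp: gl_def psd_g\<close>)
  then have "pdm (SigT + integral {s..T} gl)" by (rule pdm_add_psd[OF sym_posdef_pdm[OF SigT]])
  then show ?thesis by (simp add: Nl_def Minv_last_def gl_def[symmetric] Lt_def[symmetric] add.commute)
qed

lemma pd_Nst: assumes s: "s \<in> {0..S}" shows "pdm (Nst s)"
proof -
  have "psd (integral {s..T} gst)"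
    by (rule psd_integral[OF gst_int[OF s]]) (auto simp: gst_def psd_g)
  then have "pdm (Ups_stack SigS SigT + integral {s..T} gst)"
    by (rule pdm_add_psd[OF pdm_Ups[OF sym_posdef_pdm[OF SigS] sym_posdef_pdm[OF SigT]]])
  then show ?thesis using Nst_eq[OF s]
    by (simp add: Minv_stack_def gst_def[symmetric] Lst_def[symmetric] add.commute)
qed

lemma LmT_inj: "LmT *v x = 0 \<Longrightarrow> x = 0"
proof -
  assume "LmT *v x = 0"
  moreover have "Ltil_last LmT Phi T T = LmT"
    using PhiPhiI[of T] ST by (simp add: Ltil_last_def trans_mat_def PhiI_def)
  ultimately show "x = 0" using N2[of T x] ST by auto
qed

lemma Lt_inj: assumes s: "s \<in> {0..T}" and x: "Lt s *v x = 0" shows "x = 0"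
proof -
  have "LmT *v ((Phi T ** PhiI s) *v x) = 0" using x by (simp add: Lt_eq matrix_vector_mul_assoc matrix_mul_assoc)
  then have "(Phi T ** PhiI s) *v x = 0" by (rule LmT_inj)
  moreover have "invertible (Phi T ** PhiI s)"
    using ST s by (intro invertible_mult invP invertible_inv[OF invP, folded PhiI_def]) auto
  ultimately show "x = 0" using inj_matrix_vector_mult unfolding inj_on_def
    by (metis matrix_vector_mult_0_right UNIV_I)
qed

definition "Hl s = transpose (Lt s) ** matrix_inv (Nl s) ** Lt s"
definition "Hs s = transpose (Lf s) ** matrix_inv (Nst s) ** Lf s"

lemma pd_Hl: "s \<in> {S..T} \<Longrightarrow> pdm (Hl s)"
  unfolding Hl_def using ST by (intro pdm_congr pdm_inv pd_Nl Lt_inj) auto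

lemma pd_Hs: "s \<in> {0..S} \<Longrightarrow> pdm (Hs s)"
  unfolding Hs_def using ST N1 Lst_eq1 by (intro pdm_congr pdm_inv pd_Nst) (auto simp: Lst_def[symmetric])

lemma Htil_last: "S < s \<Longrightarrow> Htil LmS LmT Phi a SigS SigT S T s = Hl s"
  by (simp add: Htil_def Hl_def Lt_def Nl_def)

lemma Htil_st: "s \<in> {0..S} \<Longrightarrow> Htil LmS LmT Phi a SigS SigT S T s = Hs s"
  by (simp add: Htil_def Hs_def Lst_def[symmetric] Lst_eq1 Nst_eq)

lemma R1: assumes t: "t \<in> {S<..T}"
  shows "((\<lambda>s. matrix_inv (Htil LmS LmT Phi a SigS SigT S T s)) has_vector_derivative
     (B t ** matrix_inv (Htil LmS LmT Phi a SigS SigT S T t) + matrix_inv (Htil LmS LmT Phi a SigS SigT S T t) ** transpose (B t) - a t))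
     (at t within {S<..T})"
proof -
  have tT: "t \<in> {0..T}" "t \<in> {S..T}" using t ST by auto
  have dL: "(Lt has_vector_derivative - (Lt t ** B t)) (at t within {S<..T})"
    by (rule has_vector_derivative_within_subset[OF dLt[OF tT(1)]]) (use ST in auto)
  have dN: "(Nl has_vector_derivative - (Lt t ** a t ** transpose (Lt t))) (at t within {S<..T})"
  proof -
    have "{S<..T} \<subseteq> {S..T}" by auto
    then show ?thesis using has_vector_derivative_within_subset[OF dNl[OF tT(2)]] by (simp add: gl_def)
  qed
  have r: "((\<lambda>s. matrix_inv (transpose (Lt s) ** matrix_inv (Nl s) ** Lt s)) has_vector_derivative
      (B t ** matrix_inv (transpose (Lt t) ** matrix_inv (Nl t) ** Lt t)
       + matrix_inv (transpose (Lt t) ** matrix_inv (Nl t) ** Lt t) ** transpose (B t) - a t)) (at t within {S<..T})"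
  proof -
    have iN: "\<And>s. s \<in> {S<..T} \<Longrightarrow> invertible (Nl s)" by (rule pdm_invertible, rule pd_Nl) auto
    have iH: "\<And>s. s \<in> {S<..T} \<Longrightarrow> invertible (transpose (Lt s) ** matrix_inv (Nl s) ** Lt s)"
      by (rule pdm_invertible, rule pd_Hl[unfolded Hl_def]) auto
    show ?thesis by (rule riccati[where L=Lt and N=Nl and B=B and a=a and t=t and X="{S<..T}", OF dL dN iN iH t])
  qed
  have ht: "Htil LmS LmT Phi a SigS SigT S T t = Hl t" using t by (simp add: Htil_last)
  show ?thesis unfolding ht
    by (rule has_vector_derivative_transform[OF t _ r[folded Hl_def]]) (use t in \<open>auto simp: Htil_last\<close>)
qed

lemma R3: assumes t: "t \<in> {0..S}"
  shows "((\<lambda>s. matrix_inv (Htil LmS LmT Phi a SigS SigT S T s)) has_vector_derivative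
     (B t ** matrix_inv (Htil LmS LmT Phi a SigS SigT S T t) + matrix_inv (Htil LmS LmT Phi a SigS SigT S T t) ** transpose (B t) - a t))
     (at t within {0..S})"
proof -
  have tT: "t \<in> {0..T}" using t ST by auto
  have dL: "(Lf has_vector_derivative - (Lf t ** B t)) (at t within {0..S})"
    by (rule has_vector_derivative_within_subset[OF dLf[OF tT]]) (use ST in auto)
  have dN: "(Nst has_vector_derivative - (Lf t ** a t ** transpose (Lf t))) (at t within {0..S})"
    using dNst[OF t] by (simp add: gf_def)
  have r: "((\<lambda>s. matrix_inv (transpose (Lf s) ** matrix_inv (Nst s) ** Lf s)) has_vector_derivative
      (B t ** matrix_inv (transpose (Lf t) ** matrix_inv (Nst t) ** Lf t)
       + matrix_inv (transpose (Lf t) ** matrix_inv (Nst t) ** Lf t) ** transpose (B t) - a t)) (at t within {0..S})"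
  proof -
    have iN: "\<And>s. s \<in> {0..S} \<Longrightarrow> invertible (Nst s)" by (rule pdm_invertible, rule pd_Nst) auto
    have iH: "\<And>s. s \<in> {0..S} \<Longrightarrow> invertible (transpose (Lf s) ** matrix_inv (Nst s) ** Lf s)"
      by (rule pdm_invertible, rule pd_Hs[unfolded Hs_def]) auto
    show ?thesis by (rule riccati[where L=Lf and N=Nst and B=B and a=a and t=t and X="{0..S}", OF dL dN iN iH t])
  qed
  have ht: "Htil LmS LmT Phi a SigS SigT S T t = Hs t" using t by (simp add: Htil_st)
  show ?thesis unfolding ht
    by (rule has_vector_derivative_transform[OF t _ r[folded Hs_def]]) (use t in \<open>auto simp: Htil_st\<close>)
qed

lemma R2: "matrix_inv (Htil LmS LmT Phi a SigS SigT S T T) = matrix_inv (transpose LmT ** matrix_inv SigT ** LmT)"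
proof -
  have "Lt T = LmT" using PhiPhiI[of T] ST by (simp add: Lt_eq matrix_mul_assoc[symmetric])
  moreover have "Nl T = SigT" by (simp add: Nl_def Minv_last_def)
  ultimately show ?thesis using ST by (simp add: Htil_last Hl_def)
qed

lemma Lf_S: "Lf S = stk LmS (Lt S)"
  using PhiPhiI[OF SinT] by (simp add: Lf_def Lt_def Ltil_last_def trans_mat_def PhiI_def)

lemma Nst_S: "Nst S = Ups_stack SigS (Nl S)"
proof -
  have "Nl S = integral {S..T} gl + SigT"
    by (simp add: Nl_def Minv_last_def gl_def[abs_def] Lt_def[abs_def])
  then show ?thesis by (simp add: Nst_def int_gstST Ups_add)
qed

lemma iSigS: "invertible SigS" by (rule pdm_invertible[OF sym_posdef_pdm[OF SigS]])

lemma Hs_S: "Hs S = transpose LmS ** matrix_inv SigS ** LmS + Hl S"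
proof -
  have iN: "invertible (Nl S)" using ST by (intro pdm_invertible pd_Nl) auto
  show ?thesis by (simp add: Hs_def Lf_S Nst_S Ups_inv[OF iSigS iN] quad_stk Hl_def)
qed

lemma R4: "\<exists>Hp. ((\<lambda>s. matrix_inv (Htil LmS LmT Phi a SigS SigT S T s)) \<longlongrightarrow> Hp) (at_right S)
   \<and> matrix_inv (Htil LmS LmT Phi a SigS SigT S T S) = Hp - Hp ** transpose LmS ** matrix_inv (SigS + LmS ** Hp ** transpose LmS) ** LmS ** Hp"
proof (intro exI conjI)
  have S1: "S \<in> {S..T}" using ST by auto
  have cLt: "continuous (at S within {S..T}) Lt"
    using continuous_on_subset[OF contLt, of "{S..T}"] ST S1 by (auto simp: continuous_on_eq_continuous_within)
  have cNl: "continuous (at S within {S..T}) Nl" by (rule has_vector_derivative_continuous[OF dNl[OF S1]])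
  have cMl: "continuous (at S within {S..T}) (\<lambda>s. matrix_inv (Nl s))"
    by (rule inv_cont[OF cNl _ S1]) (rule pdm_invertible, rule pd_Nl, assumption)
  have cHl: "continuous (at S within {S..T}) Hl"
    unfolding Hl_def[abs_def]
    by (intro bounded_bilinear.continuous[OF bb_mm] bounded_linear.continuous[OF bl_transpose] cLt cMl)
  have cH: "continuous (at S within {S..T}) (\<lambda>s. matrix_inv (Hl s))"
    by (rule inv_cont[OF cHl _ S1]) (rule pdm_invertible, rule pd_Hl, assumption)
  then have lim: "((\<lambda>s. matrix_inv (Hl s)) \<longlongrightarrow> matrix_inv (Hl S)) (at_right S)"
    using at_within_Icc_at_right[OF ST(2)] by (simp add: continuous_within)
  show "((\<lambda>s. matrix_inv (Htil LmS LmT Phi a SigS SigT S T s)) \<longlongrightarrow> matrix_inv (Hl S)) (at_right S)"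
  proof (rule tendsto_cong[THEN iffD2, OF _ lim])
    show "\<forall>\<^sub>F s in at_right S. matrix_inv (Htil LmS LmT Phi a SigS SigT S T s) = matrix_inv (Hl s)"
      using eventually_at_right_less[of S] by eventually_elim (simp add: Htil_last)
  qed
  have iHl: "invertible (Hl S)" by (rule pdm_invertible, rule pd_Hl[OF S1])
  have "psd (transpose (transpose LmS) ** matrix_inv (Hl S) ** transpose LmS)"
    by (rule psd_congr, rule pdm_psd, rule pdm_inv, rule pd_Hl[OF S1])
  then have iK: "invertible (SigS + LmS ** matrix_inv (Hl S) ** transpose LmS)"
    by (intro pdm_invertible pdm_add_psd[OF sym_posdef_pdm[OF SigS]]) simp
  have "matrix_inv (Htil LmS LmT Phi a SigS SigT S T S) = matrix_inv (transpose LmS ** matrix_inv SigS ** LmS + Hl S)"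
    using ST by (simp add: Htil_st Hs_S)
  also have "\<dots> = matrix_inv (Hl S) - matrix_inv (Hl S) ** transpose LmS ** matrix_inv (SigS + LmS ** matrix_inv (Hl S) ** transpose LmS) ** LmS ** matrix_inv (Hl S)"
    by (rule woodbury[OF iHl iSigS iK])
  finally show "matrix_inv (Htil LmS LmT Phi a SigS SigT S T S) = matrix_inv (Hl S) - matrix_inv (Hl S) ** transpose LmS ** matrix_inv (SigS + LmS ** matrix_inv (Hl S) ** transpose LmS) ** LmS ** matrix_inv (Hl S)" .
qed

end

theorem lemma2:
  fixes S T :: real
    and beta :: "real \<Rightarrow> real^'d"
    and B :: "real \<Rightarrow> real^'d^'d"
    and sigma :: "real \<Rightarrow> real^'d2^'d"
    and a :: "real \<Rightarrow> real^'d^'d"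
    and Phi :: "real \<Rightarrow> real^'d^'d"
    and LmS :: "real^'d^'mS" and LmT :: "real^'d^'mT"
    and SigS :: "real^'mS^'mS" and SigT :: "real^'mT^'mT"
    and Hdag :: "real \<Rightarrow> real^'d^'d"
  assumes ST: "0 < S" "S < T"
    and cont: "continuous_on {0..T} beta" "continuous_on {0..T} B" "continuous_on {0..T} sigma"
    and a_def: "\<And>t. a t = sigma t ** transpose (sigma t)"
    and Phi_ode: "\<And>t. t \<in> {0..T} \<Longrightarrow> (Phi has_vector_derivative (B t ** Phi t)) (at t within {0..T})"
    and Phi0: "Phi 0 = mat 1"
    and SigS: "sym_posdef SigS" and SigT: "sym_posdef SigT"
    and M1: "\<And>t. t \<in> {0..S} \<Longrightarrow> invertible (Minv_stack LmS LmT Phi a SigS SigT S T t)"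
    and M2: "\<And>t. t \<in> {S<..T} \<Longrightarrow> invertible (Minv_last LmT Phi a SigT T t)"
    and N1: "\<And>t x. t \<in> {0..S} \<Longrightarrow> Ltil_stack LmS LmT Phi S T t *v x = 0 \<Longrightarrow> x = 0"
    and N2: "\<And>t x. t \<in> {S<..T} \<Longrightarrow> Ltil_last LmT Phi T t *v x = 0 \<Longrightarrow> x = 0"
    and Hdag_def: "\<And>t. Hdag t = matrix_inv (Htil LmS LmT Phi a SigS SigT S T t)"
  shows "(\<forall>t \<in> {S<..T}. (Hdag has_vector_derivative
             (B t ** Hdag t + Hdag t ** transpose (B t) - a t)) (at t within {S<..T}))
       \<and> Hdag T = matrix_inv (transpose LmT ** matrix_inv SigT ** LmT)
       \<and> (\<forall>t \<in> {0..S}. (Hdag has_vector_derivative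
             (B t ** Hdag t + Hdag t ** transpose (B t) - a t)) (at t within {0..S}))
       \<and> (\<exists>Hp. (Hdag \<longlongrightarrow> Hp) (at_right S)
             \<and> Hdag S = Hp - Hp ** transpose LmS ** matrix_inv (SigS + LmS ** Hp ** transpose LmS) ** LmS ** Hp)"
proof -
  interpret setting S T B sigma a Phi LmS LmT SigS SigT
    using assms by unfold_locales auto
  have H: "Hdag = (\<lambda>t. matrix_inv (Htil LmS LmT Phi a SigS SigT S T t))"
    using Hdag_def by (simp add: fun_eq_iff)
  show ?thesis unfolding H using R1 R2 R3 R4 by auto
qed

end
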